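(* Let $(X\cup Y,\mathbf{d})$ be a finite metric space with opening costs $\mathrm{open}(f)>0$ for $f\in Y$, let $\epsilon \in (0,\frac 12 )$ and let $S\subseteq Y$ be a $c$-approximation to the facility location problem on this instance. For each $x\in X$ let $N_x$ be an $\epsilon \cdot \mathbf{d}(x, S)$-net of $B_Y(\pi_S(x), \mathbf{d}(x,S)/\epsilon)$ and define $\widehat{\mathbf{d}}_S(x,y) = \min_{u\in N_x} \mathbf{d}(x,u) + \mathbf{d}(u,y)$ for $y\in Y$. Then for any set $F\subseteq Y$, \[ \widehat{\mathbf{d}}_S(X,F) + \sum_{f\in F} \mathrm{open}(f) \le (1+6c \epsilon) \cdot \mathrm{fl}(X,F), \] where $\widehat{\mathbf{d}}_S(X,F)=\sum_{x\in X}\min_{y\in F}\widehat{\mathbf{d}}_S(x,y)$ and $\mathrm{fl}(X,F)=\sum_{x\in X}\mathbf{d}(x,F)+\sum_{f\in F}\mathrm{open}(f)$.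
   Context: Facility location: find $F\subseteq Y$ minimizing $\mathrm{fl}(X,F)$; $S$ is a $c$-approximation if $\mathrm{fl}(X,S)\le c\cdot\min_{F\subseteq Y}\mathrm{fl}(X,F)$. $B_Y(x,r)=\{y\in Y:\mathbf{d}(x,y)\le r\}$; $\pi_S(x)$ is a point of $S$ closest to $x$, $\mathbf{d}(x,S)=\mathbf{d}(x,\pi_S(x))$, $\mathbf{d}(x,F)=\min_{f\in F}\mathbf{d}(x,f)$. A $\rho$-net of $B$ is a subset $N\subseteq B$ whose distinct points are pairwise at distance $\ge\rho$ and such that every point of $B$ is within distance $\rho$ of some point of $N$. *)

theory Defs
  imports "HOL-Analysis.Analysis"
begin

definition dist_set :: "('a \<Rightarrow> 'a \<Rightarrow> real) \<Rightarrow> 'a \<Rightarrow> 'a set \<Rightarrow> real" where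
  "dist_set d x F = Min ((d x) ` F)"

definition fl :: "('a \<Rightarrow> 'a \<Rightarrow> real) \<Rightarrow> ('a \<Rightarrow> real) \<Rightarrow> 'a set \<Rightarrow> 'a set \<Rightarrow> real" where
  "fl d opn X F = (\<Sum>x\<in>X. dist_set d x F) + (\<Sum>f\<in>F. opn f)"

text \<open>S is a c-approximation: fl(X,S) is at most c times the optimum over facility sets
  (the empty facility set has infinite cost whenever X is nonempty, so it is excluded).\<close>
definition c_approx :: "('a \<Rightarrow> 'a \<Rightarrow> real) \<Rightarrow> ('a \<Rightarrow> real) \<Rightarrow> 'a set \<Rightarrow> 'a set \<Rightarrow> real \<Rightarrow> 'a set \<Rightarrow> bool" where
  "c_approx d opn X Y c S \<longleftrightarrow> S \<subseteq> Y \<and> S \<noteq> {} \<and>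
     (\<forall>F. F \<subseteq> Y \<and> F \<noteq> {} \<longrightarrow> fl d opn X S \<le> c * fl d opn X F)"

definition ballY :: "('a \<Rightarrow> 'a \<Rightarrow> real) \<Rightarrow> 'a set \<Rightarrow> 'a \<Rightarrow> real \<Rightarrow> 'a set" where
  "ballY d Y x r = {y \<in> Y. d x y \<le> r}"

definition is_net :: "('a \<Rightarrow> 'a \<Rightarrow> real) \<Rightarrow> real \<Rightarrow> 'a set \<Rightarrow> 'a set \<Rightarrow> bool" where
  "is_net d \<rho> B N \<longleftrightarrow> N \<subseteq> B \<and> (\<forall>u\<in>N. \<forall>v\<in>N. u \<noteq> v \<longrightarrow> \<rho> \<le> d u v) \<and>
     (\<forall>b\<in>B. \<exists>u\<in>N. d b u \<le> \<rho>)"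

definition dhat :: "('a \<Rightarrow> 'a \<Rightarrow> real) \<Rightarrow> ('a \<Rightarrow> 'a set) \<Rightarrow> 'a \<Rightarrow> 'a \<Rightarrow> real" where
  "dhat d N x y = Min ((\<lambda>u. d x u + d u y) ` N x)"

end

theory Submission
  imports Defs
begin

theorem corollary3p3:
  fixes d :: "'a \<Rightarrow> 'a \<Rightarrow> real" and X Y S F :: "'a set" and opn :: "'a \<Rightarrow> real"
    and \<epsilon> c :: real and p :: "'a \<Rightarrow> 'a" and N :: "'a \<Rightarrow> 'a set"
  assumes "finite X" and "finite Y"
    and "Metric_space (X \<union> Y) d"
    and "\<forall>f\<in>Y. opn f > 0"
    and "0 < \<epsilon>" and "\<epsilon> < 1/2"
    and "c_approx d opn X Y c S"
    and "\<forall>x\<in>X. p x \<in> S \<and> d x (p x) = dist_set d x S"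
    and "\<forall>x\<in>X. is_net d (\<epsilon> * dist_set d x S) (ballY d Y (p x) (dist_set d x S / \<epsilon>)) (N x)"
    and "F \<subseteq> Y" and "F \<noteq> {}"
  shows "(\<Sum>x\<in>X. Min ((dhat d N x) ` F)) + (\<Sum>f\<in>F. opn f) \<le> (1 + 6 * c * \<epsilon>) * fl d opn X F"
proof -
  interpret M: Metric_space "X \<union> Y" d by fact
  have SY: "S \<subseteq> Y" "S \<noteq> {}" using assms(7) unfolding c_approx_def by auto
  have finF: "finite F" using assms(2,10) finite_subset by blast
  have finS: "finite S" using assms(2) SY finite_subset by blast
  have dsnn: "dist_set d x A \<ge> 0" if "finite A" "A \<noteq> {}" for x A
    unfolding dist_set_def using that by (simp add: Min_ge_iff)
  have flnn: "(\<Sum>x\<in>X. dist_set d x F) \<ge> 0" using dsnn finF assms(11) by (simp add: sum_nonneg)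
  have opF: "(\<Sum>f\<in>F. opn f) \<ge> 0" using assms(4,10) by (smt (verit) subsetD sum_nonneg)
  have opS: "(\<Sum>f\<in>S. opn f) > 0" using assms(4) SY finS by (meson subsetD sum_pos)
  have flS: "fl d opn X S > 0" unfolding fl_def using opS dsnn finS SY
    by (smt (verit) sum_nonneg)
  have "fl d opn X S \<le> c * fl d opn X S" using assms(7) SY unfolding c_approx_def by blast
  hence c1: "c \<ge> 1" using flS by (smt (verit) mult_le_cancel_right1)
  have cS: "(\<Sum>x\<in>X. dist_set d x S) \<le> c * fl d opn X F"
  proof -
    have "(\<Sum>x\<in>X. dist_set d x S) \<le> fl d opn X S" unfolding fl_def using opS by simp
    also have "\<dots> \<le> c * fl d opn X F" using assms(7,10,11) unfolding c_approx_def by blast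
    finally show ?thesis .
  qed
  have key: "Min ((dhat d N x) ` F) \<le> dist_set d x F + 2 * \<epsilon> * dist_set d x S + 4 * \<epsilon> * dist_set d x F"
    if xX: "x \<in> X" for x
  proof -
    define D where "D = dist_set d x S"
    define r where "r = dist_set d x F"
    obtain f where f: "f \<in> F" "d x f = r"
    proof -
      have "Min (d x ` F) \<in> d x ` F" using Min_in[of "d x ` F"] finF assms(11) by blast
      then obtain g where "g \<in> F" "Min (d x ` F) = d x g" by blast
      thus ?thesis using that unfolding r_def dist_set_def by simp
    qed
    have px: "p x \<in> S" "d x (p x) = D" using assms(8) xX D_def by auto
    have net: "is_net d (\<epsilon> * D) (ballY d Y (p x) (D / \<epsilon>)) (N x)" using assms(9) xX D_def by auto
    have NY: "N x \<subseteq> Y" using net unfolding is_net_def ballY_def by auto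
    have finN: "finite (N x)" using NY assms(2) finite_subset by blast
    have D0: "D \<ge> 0" using dsnn finS SY D_def by auto
    have r0: "r \<ge> 0" using dsnn finF assms(11) r_def by auto
    have fY: "f \<in> Y" using f assms(10) by auto
    have pY: "p x \<in> Y" using px SY by auto
    have m1: "Min ((dhat d N x) ` F) \<le> dhat d N x f" using finF f by simp
    have m2: "dhat d N x f \<le> d x u + d u f" if "u \<in> N x" for u
      unfolding dhat_def using finN that by simp
    have tri: "d a c' \<le> d a b + d b c'" if "a \<in> X \<union> Y" "b \<in> X \<union> Y" "c' \<in> X \<union> Y" for a b c'
      using M.triangle that by blast
    show ?thesis
    proof (cases "d (p x) f \<le> D / \<epsilon>")
      case True
      hence "f \<in> ballY d Y (p x) (D / \<epsilon>)" unfolding ballY_def using fY by auto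
      then obtain u where u: "u \<in> N x" "d f u \<le> \<epsilon> * D" using net unfolding is_net_def by blast
      have uY: "u \<in> Y" using u NY by auto
      have "d x u \<le> d x f + d f u" using tri xX fY uY by auto
      moreover have "d u f = d f u" using M.commute by blast
      moreover have "\<epsilon> * D \<ge> 0" using D0 assms(5) by simp
      ultimately have "d x u + d u f \<le> r + 2 * \<epsilon> * D" using f u by linarith
      moreover have "\<epsilon> * r \<ge> 0" using r0 assms(5) by simp
      ultimately have "Min ((dhat d N x) ` F) \<le> r + 2 * \<epsilon> * D + 4 * \<epsilon> * r" using m1 m2[OF u(1)] by linarith
      thus ?thesis by (simp add: D_def r_def)
    next
      case False
      have "d (p x) f \<le> d (p x) x + d x f" using tri xX fY pY by auto
      moreover have "d (p x) x = D" using px M.commute by metis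
      ultimately have "D / \<epsilon> < D + r" using False f by linarith
      hence "D < \<epsilon> * (D + r)" using assms(5) by (simp add: divide_less_eq mult.commute)
      hence "D * (1 - \<epsilon>) < \<epsilon> * r" by (simp add: algebra_simps)
      moreover have "D * (1/2) \<le> D * (1 - \<epsilon>)" using D0 assms(6) by (intro mult_left_mono) auto
      ultimately have Dr: "D \<le> 2 * \<epsilon> * r" by linarith
      have "p x \<in> ballY d Y (p x) (D / \<epsilon>)" unfolding ballY_def using pY D0 assms(5) by simp
      then obtain u where u: "u \<in> N x" "d (p x) u \<le> \<epsilon> * D" using net unfolding is_net_def by blast
      have uY: "u \<in> Y" using u NY by auto
      have "d x u \<le> d x (p x) + d (p x) u" using tri xX pY uY by auto
      hence xu: "d x u \<le> D + \<epsilon> * D" using px u by linarith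
      have "d u f \<le> d u x + d x f" using tri xX fY uY by auto
      moreover have "d u x = d x u" using M.commute by blast
      ultimately have "d x u + d u f \<le> r + 2 * D + 2 * \<epsilon> * D" using xu f by linarith
      hence "Min ((dhat d N x) ` F) \<le> r + 2 * \<epsilon> * D + 4 * \<epsilon> * r" using m1 m2[OF u(1)] Dr by linarith
      thus ?thesis by (simp add: D_def r_def)
    qed
  qed
  have "(\<Sum>x\<in>X. Min ((dhat d N x) ` F)) \<le> (\<Sum>x\<in>X. dist_set d x F + 2 * \<epsilon> * dist_set d x S + 4 * \<epsilon> * dist_set d x F)"
    using key by (rule sum_mono)
  also have "\<dots> = (\<Sum>x\<in>X. dist_set d x F) + 2 * \<epsilon> * (\<Sum>x\<in>X. dist_set d x S) + 4 * \<epsilon> * (\<Sum>x\<in>X. dist_set d x F)"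
    by (simp add: sum.distrib sum_distrib_left)
  finally have A: "(\<Sum>x\<in>X. Min ((dhat d N x) ` F)) \<le> \<dots>" .
  define Fl where "Fl = fl d opn X F"
  have FlD: "Fl = (\<Sum>x\<in>X. dist_set d x F) + (\<Sum>f\<in>F. opn f)" unfolding Fl_def fl_def by simp
  have B: "2 * \<epsilon> * (\<Sum>x\<in>X. dist_set d x S) \<le> 2 * \<epsilon> * (c * Fl)"
    using cS assms(5) Fl_def by simp
  have C: "4 * \<epsilon> * (\<Sum>x\<in>X. dist_set d x F) \<le> 4 * \<epsilon> * (c * Fl)"
  proof -
    have "(\<Sum>x\<in>X. dist_set d x F) \<le> Fl" using FlD opF by simp
    also have "\<dots> \<le> c * Fl" using c1 FlD opF flnn by (simp add: mult_le_cancel_right1)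
    finally show ?thesis using assms(5) by simp
  qed
  have "(1 + 6 * c * \<epsilon>) * Fl = Fl + 2 * \<epsilon> * (c * Fl) + 4 * \<epsilon> * (c * Fl)" by (simp add: algebra_simps)
  hence "(\<Sum>x\<in>X. Min ((dhat d N x) ` F)) + (\<Sum>f\<in>F. opn f) \<le> (1 + 6 * c * \<epsilon>) * Fl" using A B C FlD by linarith
  thus ?thesis by (simp add: Fl_def)
qed

end
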